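(* Let $X,X_1,X_2,\dots$ be i.i.d. real random variables with $EX=0$ and $E X^2<\infty$; let $S_n=X_1+\dots+X_n$, $\mu>0$, and $T_m=\inf\{n\ge0:S_n-\mu n>m\}$. Let $m\ge1$, $\delta\in(0,1/2]$, $\gamma>0$, $\alpha>1$ satisfy $$\text{(i)}\ \frac{E(X^2)}{m^{2(1-\delta)}}\le\frac12,\qquad \text{(ii)}\ \sup_{z\in\{\mu 2^{k}:k\ge0\}}\frac{6(1+2z+m)^{\alpha}P\big(X>(z+m)^{1-\delta}\big)}{(\alpha-1)(m+1)^{\alpha-1}\mu}\le1,$$ $$\text{(iii)}\ \sup_{z\in\{\mu 2^{k}:k\ge0\}}\frac{\exp\Big(-\gamma(m+z)^{\delta}+\frac{\gamma^2e^{\gamma}E(X^2)\,z}{(m+z)^{2(1-\delta)}\mu}+4\frac{z}{\mu}P\big(X>(z+m)^{1-\delta}\big)\Big)}{3^{-1}(\alpha-1)(m+1)^{\alpha-1}(1+2z+m)^{-\alpha}\,z}\le1.$$ For $k\ge2$ let $n_k=2^{k-1}$, $C_k=n_{k-1}\mu+m$, $\theta_k=\gamma/C_k^{1-\delta}$, $$\psi_k(\theta)=\log\frac{E\big[e^{\theta X}\mathbf 1(X\le C_k^{1-\delta})\big]}{P(X\le C_k^{1-\delta})},$$ $\bar G(t)=\int_t^\infty(1+s)^{-\alpha}ds$ and $g(k)=\big(\bar G(m+\mu n_{k-1})-\bar G(m+\mu n_k)\big)/\bar G(m+\mu n_1)$. Then for every $k\ge2$, on the event $\{T_m\in[n_{k-1},n_k-1]\}$,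 $$\frac{3\exp\big(-\theta_kS_{T_m}+T_m\psi_k(\theta_k)\big)}{g(k)}\le1.$$
   Context: $S_{T_m}$ is the undrifted sum $X_1+\dots+X_{T_m}$ evaluated at the first time the drifted walk $S_n-\mu n$ exceeds $m$. *)

theory Defs
  imports "HOL-Probability.Probability"
begin

definition psum :: "(nat \<Rightarrow> 'a \<Rightarrow> real) \<Rightarrow> nat \<Rightarrow> 'a \<Rightarrow> real" where
  "psum X n \<omega> = (\<Sum>i\<in>{1..n}. X i \<omega>)"

definition passage_time :: "(nat \<Rightarrow> 'a \<Rightarrow> real) \<Rightarrow> real \<Rightarrow> real \<Rightarrow> 'a \<Rightarrow> enat" where
  "passage_time X \<mu> m \<omega> =
     (if \<exists>n. psum X n \<omega> - \<mu> * real n > m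
      then enat (LEAST n. psum X n \<omega> - \<mu> * real n > m) else \<infinity>)"

definition nseq :: "nat \<Rightarrow> nat" where
  "nseq k = 2 ^ (k - 1)"

definition Gbar :: "real \<Rightarrow> real \<Rightarrow> real" where
  "Gbar \<alpha> t = (LINT s:{t..}|lborel. (1 + s) powr (- \<alpha>))"

end

theory Submission
  imports Defs "HOL-Real_Asymp.Real_Asymp"
begin

lemma exp_quad_bound:
  fixes y g :: real assumes "y \<le> g" "0 \<le> g"
  shows "exp y \<le> 1 + y + y\<^sup>2 * exp g / 2"
proof (cases "y \<ge> 0")
  case True
  obtain t where t: "\<bar>t\<bar> \<le> \<bar>y\<bar>" "exp y = (\<Sum>m<2. y ^ m / fact m) + exp t / fact 2 * y ^ 2"
    using Maclaurin_exp_le[of y 2] by blast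
  have "exp t \<le> exp g" using t(1) True assms by auto
  hence "exp t / 2 * y^2 \<le> exp g / 2 * y^2" by (intro mult_right_mono) auto
  thus ?thesis using t(2) by (auto simp: eval_nat_numeral algebra_simps)
next
  case False
  obtain t where t: "\<bar>t\<bar> \<le> \<bar>y\<bar>" "exp y = (\<Sum>m<3. y ^ m / fact m) + exp t / fact 3 * y ^ 3"
    using Maclaurin_exp_le[of y 3] by blast
  have "y*y > 0" using False by (intro mult_neg_neg) auto
  hence "y^3 < 0" using False by (simp add: power3_eq_cube mult_pos_neg)
  hence "exp t / fact 3 * y ^ 3 \<le> 0" by (intro mult_nonneg_nonpos) auto
  moreover have "y^2 * 1 \<le> y\<^sup>2 * exp g" using assms by (intro mult_left_mono) auto
  hence "y^2 / 2 \<le> y\<^sup>2 * exp g / 2" by (simp add: divide_right_mono)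
  ultimately show ?thesis using t(2) by (auto simp: eval_nat_numeral algebra_simps)
qed

lemma (in prob_space) cheb:
  fixes X :: "'a \<Rightarrow> real"
  assumes rv: "X \<in> borel_measurable M" and int2: "integrable M (\<lambda>\<omega>. (X \<omega>)\<^sup>2)" and c: "c > 0"
  shows "prob {\<omega>\<in>space M. X \<omega> > c} \<le> expectation (\<lambda>\<omega>. (X \<omega>)\<^sup>2) / c\<^sup>2"
proof -
  let ?B = "{\<omega>\<in>space M. X \<omega> > c}"
  have Bm: "?B \<in> events" using rv by measurable
  have indB: "integrable M (indicator ?B :: _ \<Rightarrow> real)"
    using Bm by (intro integrable_real_indicator) (auto simp: less_top[symmetric])
  have "c\<^sup>2 * prob ?B = expectation (\<lambda>\<omega>. c\<^sup>2 * indicator ?B \<omega>)"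
    using Bm by (simp add: Int_absorb2 sets.sets_into_space)
  also have "\<dots> \<le> expectation (\<lambda>\<omega>. (X \<omega>)\<^sup>2)"
  proof (rule integral_mono)
    show "integrable M (\<lambda>\<omega>. c\<^sup>2 * indicator ?B \<omega>)" using indB by simp
    show "integrable M (\<lambda>\<omega>. (X \<omega>)\<^sup>2)" by fact
    fix \<omega> assume "\<omega> \<in> space M"
    show "c\<^sup>2 * indicator ?B \<omega> \<le> (X \<omega>)\<^sup>2"
      using c by (auto simp: indicator_def intro!: power_mono)
  qed
  finally show ?thesis using c by (simp add: field_simps)
qed

lemma (in prob_space) psi_bound:
  fixes X :: "'a \<Rightarrow> real"
  assumes rv: "X \<in> borel_measurable M" and int1: "integrable M X" and mean0: "expectation X = 0"
    and int2: "integrable M (\<lambda>\<omega>. (X \<omega>)\<^sup>2)" and c: "c > 0" and th: "\<theta> > 0" "\<theta> * c = \<gamma>"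
    and q: "prob {\<omega>\<in>space M. X \<omega> > c} \<le> 1/2"
  shows "ln ((LINT \<omega>|M. exp (\<theta> * X \<omega>) * indicator {\<omega>\<in>space M. X \<omega> \<le> c} \<omega>)
              / prob {\<omega>\<in>space M. X \<omega> \<le> c})
         \<le> \<theta>\<^sup>2 * exp \<gamma> * expectation (\<lambda>\<omega>. (X \<omega>)\<^sup>2) / 2 + 2 * prob {\<omega>\<in>space M. X \<omega> > c}"
proof -
  define A where "A = {\<omega>\<in>space M. X \<omega> \<le> c}"
  define Bs where "Bs = {\<omega>\<in>space M. X \<omega> > c}"
  define E2 where "E2 = expectation (\<lambda>\<omega>. (X \<omega>)\<^sup>2)"
  define num where "num = (LINT \<omega>|M. exp (\<theta> * X \<omega>) * indicator A \<omega>)"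
  have gam: "\<gamma> > 0" using th c by (metis mult_pos_pos)
  have Am[measurable]: "A \<in> events" unfolding A_def using rv by measurable
  have Bm[measurable]: "Bs \<in> events" unfolding Bs_def using rv by measurable
  have AB: "A = space M - Bs" unfolding A_def Bs_def by auto
  have pA: "prob A = 1 - prob Bs" using prob_compl[OF Bm] AB by simp
  have q': "prob Bs \<le> 1/2" using q Bs_def by simp
  have p_pos: "prob A \<ge> 1/2" using pA q' by simp
  have fint: "integrable M (\<lambda>\<omega>. exp (\<theta> * X \<omega>) * indicator A \<omega>)"
  proof (rule integrable_const_bound[where B="exp \<gamma>"])
    show "AE x in M. norm (exp (\<theta> * X x) * indicator A x) \<le> exp \<gamma>"
    proof (rule AE_I2)
      fix x assume "x \<in> space M"
      show "norm (exp (\<theta> * X x) * indicator A x) \<le> exp \<gamma>"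
      proof (cases "x \<in> A")
        case True
        hence "\<theta> * X x \<le> \<theta> * c" using th unfolding A_def by (auto intro: mult_left_mono)
        thus ?thesis using True th by simp
      qed simp
    qed
    show "(\<lambda>\<omega>. exp (\<theta> * X \<omega>) * indicator A \<omega>) \<in> borel_measurable M" using rv by measurable
  qed
  have indA: "integrable M (indicator A :: _ \<Rightarrow> real)"
    using Am by (intro integrable_real_indicator) (auto simp: less_top[symmetric])
  have int3: "integrable M (\<lambda>\<omega>. X \<omega> * indicator Bs \<omega>)"
    using int1 Bm by (rule integrable_real_mult_indicator[rotated])
  have num_le: "num \<le> prob A + \<theta>\<^sup>2 * exp \<gamma> * E2 / 2"
  proof -
    have "num \<le> (LINT \<omega>|M. indicator A \<omega> + \<theta> * (X \<omega> - X \<omega> * indicator Bs \<omega>) + \<theta>\<^sup>2 * exp \<gamma> / 2 * (X \<omega>)\<^sup>2)"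
      unfolding num_def
    proof (rule integral_mono)
      show "integrable M (\<lambda>\<omega>. indicator A \<omega> + \<theta> * (X \<omega> - X \<omega> * indicator Bs \<omega>) + \<theta>\<^sup>2 * exp \<gamma> / 2 * (X \<omega>)\<^sup>2)"
        using int1 int2 int3 indA by simp
      show "integrable M (\<lambda>\<omega>. exp (\<theta> * X \<omega>) * indicator A \<omega>)" by (fact fint)
      fix \<omega> assume w: "\<omega> \<in> space M"
      show "exp (\<theta> * X \<omega>) * indicator A \<omega> \<le> indicator A \<omega> + \<theta> * (X \<omega> - X \<omega> * indicator Bs \<omega>) + \<theta>\<^sup>2 * exp \<gamma> / 2 * (X \<omega>)\<^sup>2"
      proof (cases "X \<omega> \<le> c")
        case True
        hence inA: "\<omega> \<in> A" "\<omega> \<notin> Bs" using w unfolding A_def Bs_def by auto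
        have "\<theta> * X \<omega> \<le> \<gamma>" using True th by (metis mult_left_mono less_imp_le)
        from exp_quad_bound[OF this] gam
        have "exp (\<theta> * X \<omega>) \<le> 1 + \<theta> * X \<omega> + (\<theta> * X \<omega>)\<^sup>2 * exp \<gamma> / 2" by simp
        thus ?thesis using inA by (simp add: power_mult_distrib algebra_simps)
      next
        case False
        hence inA: "\<omega> \<notin> A" "\<omega> \<in> Bs" using w unfolding A_def Bs_def by auto
        thus ?thesis by simp
      qed
    qed
    also have "\<dots> = prob A + \<theta> * (expectation X - expectation (\<lambda>\<omega>. X \<omega> * indicator Bs \<omega>)) + \<theta>\<^sup>2 * exp \<gamma> / 2 * E2"
      using int1 int2 int3 indA Am unfolding E2_def
      by (simp add: integral_add integral_diff Int_absorb2 sets.sets_into_space)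
    also have "\<dots> \<le> prob A + \<theta>\<^sup>2 * exp \<gamma> * E2 / 2"
    proof -
      have "expectation (\<lambda>\<omega>. X \<omega> * indicator Bs \<omega>) \<ge> 0"
        using c by (intro integral_nonneg_AE AE_I2) (auto simp: Bs_def indicator_def)
      thus ?thesis using mean0 th by (simp add: mult_nonneg_nonneg)
    qed
    finally show ?thesis .
  qed
  have num_nonneg: "num \<ge> 0" unfolding num_def by (intro integral_nonneg_AE AE_I2) auto
  have num_pos: "num > 0"
  proof (rule ccontr)
    assume "\<not> num > 0"
    hence "num = 0" using num_nonneg by simp
    hence "AE x in M. exp (\<theta> * X x) * indicator A x = 0"
      using integral_nonneg_eq_0_iff_AE[OF fint] unfolding num_def by auto
    hence "AE x in M. x \<notin> A" by (rule AE_mp) (auto intro!: AE_I2 simp: indicator_def)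
    hence "prob A = 0" using prob_eq_0[OF Am] by simp
    thus False using p_pos by simp
  qed
  have pp: "prob A > 0" using p_pos by simp
  have "ln (num / prob A) = ln num - ln (prob A)" using num_pos pp by (simp add: ln_div)
  also have "\<dots> \<le> (num - 1) + (1 / prob A - 1)"
  proof -
    have "ln num \<le> num - 1" using num_pos by (rule ln_le_minus_one)
    moreover have "ln (1 / prob A) \<le> 1 / prob A - 1" using pp by (intro ln_le_minus_one) simp
    moreover have "ln (1 / prob A) = - ln (prob A)" using pp by (simp add: ln_div)
    ultimately show ?thesis by linarith
  qed
  also have "\<dots> \<le> \<theta>\<^sup>2 * exp \<gamma> * E2 / 2 + 2 * prob Bs"
  proof -
    have "1 / prob A - 1 = prob Bs / prob A" using pp pA by (simp add: field_simps)
    also have "\<dots> \<le> 2 * prob Bs"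
    proof -
      have "prob Bs * 1 \<le> prob Bs * (2 * prob A)"
        using p_pos measure_nonneg[of M Bs] by (intro mult_left_mono) auto
      thus ?thesis using pp by (simp add: divide_le_eq algebra_simps)
    qed
    finally show ?thesis using num_le pA measure_nonneg[of M Bs] by linarith
  qed
  finally show ?thesis unfolding num_def A_def Bs_def E2_def .
qed

lemma Gbar_FTC:
  fixes \<alpha> a b :: real
  assumes "\<alpha> > 1" "a \<ge> 0" "a \<le> b"
  shows "((\<lambda>s. (1+s) powr (-\<alpha>)) has_integral
           ((1+b) powr (1-\<alpha>)/(1-\<alpha>) - (1+a) powr (1-\<alpha>)/(1-\<alpha>))) {a..b}"
proof (rule fundamental_theorem_of_calculus[OF assms(3)])
  fix x assume x: "x \<in> {a..b}"
  have "DERIV (\<lambda>s. (1+s) powr (1-\<alpha>)) x :> (1-\<alpha>) * (1+x) powr (1-\<alpha> - of_nat 1) * 1"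
    using assms x by (intro DERIV_fun_powr) (auto intro!: derivative_eq_intros)
  hence "DERIV (\<lambda>s. (1+s) powr (1-\<alpha>)/(1-\<alpha>)) x :> (1-\<alpha>) * (1+x) powr (1-\<alpha> - of_nat 1) * 1 / (1-\<alpha>)"
    by (rule DERIV_cdivide)
  moreover have "(1-\<alpha>) * (1+x) powr (1-\<alpha> - of_nat 1) * 1 / (1-\<alpha>) = (1+x) powr (-\<alpha>)"
    using assms by simp
  ultimately have "((\<lambda>s. (1+s) powr (1-\<alpha>)/(1-\<alpha>)) has_real_derivative (1+x) powr (-\<alpha>)) (at x within {a..b})"
    by (metis has_field_derivative_at_within)
  thus "((\<lambda>s. (1+s) powr (1-\<alpha>)/(1-\<alpha>)) has_vector_derivative (1+x) powr (-\<alpha>)) (at x within {a..b})"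
    by (simp add: has_real_derivative_iff_has_vector_derivative)
qed

lemma Gbar_hasint:
  fixes \<alpha> t :: real
  assumes "\<alpha> > 1" "t \<ge> 0"
  shows "((\<lambda>s. (1+s) powr (-\<alpha>)) has_integral ((1+t) powr (1-\<alpha>)/(\<alpha>-1))) {t..}"
proof (rule has_integral_to_inf)
  define F where "F = (\<lambda>y::real. (1+y) powr (1-\<alpha>)/(1-\<alpha>))"
  have I: "((\<lambda>s. (1+s) powr (-\<alpha>)) has_integral (F y - F t)) {t..y}" if "y \<ge> t" for y
    using Gbar_FTC[OF assms that] unfolding F_def .
  show "(\<lambda>s. (1+s) powr (-\<alpha>)) integrable_on {t..y}" for y
  proof (cases "y \<ge> t")
    case True thus ?thesis using I by blast
  next
    case False thus ?thesis by (simp add: integrable_on_empty)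
  qed
  have ev: "\<forall>\<^sub>F y in at_top. integral {t..y} (\<lambda>s. (1+s) powr (-\<alpha>)) = F y - F t"
    using I by (meson eventually_at_top_linorderI integral_unique)
  have "((\<lambda>y. (1+y) powr (1-\<alpha>)) \<longlongrightarrow> 0) at_top"
    using assms by (intro tendsto_neg_powr filterlim_tendsto_add_at_top[OF tendsto_const filterlim_ident]) auto
  hence "((\<lambda>y. F y - F t) \<longlongrightarrow> 0/(1-\<alpha>) - F t) at_top"
    unfolding F_def using assms by (intro tendsto_diff tendsto_divide tendsto_const) auto
  moreover have eq: "0/(1-\<alpha>) - F t = (1+t) powr (1-\<alpha>)/(\<alpha>-1)"
    unfolding F_def by (simp add: minus_divide_right)
  ultimately have "((\<lambda>y. F y - F t) \<longlongrightarrow> (1+t) powr (1-\<alpha>)/(\<alpha>-1)) at_top"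
    by (simp only: eq)
  thus "((\<lambda>y. integral {t..y} (\<lambda>s. (1+s) powr (-\<alpha>))) \<longlongrightarrow> (1+t) powr (1-\<alpha>)/(\<alpha>-1)) at_top"
    using ev by (simp add: tendsto_cong)
  show "\<And>y. y \<ge> t \<Longrightarrow> (1+y) powr (-\<alpha>) \<ge> 0" by simp
qed

lemma Gbar_closed:
  fixes \<alpha> t :: real
  assumes "\<alpha> > 1" "t \<ge> 0"
  shows "Gbar \<alpha> t = (1+t) powr (1-\<alpha>)/(\<alpha>-1)"
proof -
  define g where "g = (\<lambda>s::real. indicator {t..} s * (1+s) powr (-\<alpha>))"
  have "((\<lambda>s. if s \<in> {t..} then (1+s) powr (-\<alpha>) else 0) has_integral ((1+t) powr (1-\<alpha>)/(\<alpha>-1))) UNIV"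
    using Gbar_hasint[OF assms] by (subst has_integral_restrict_UNIV)
  moreover have "(\<lambda>s. if s \<in> {t..} then (1+s) powr (-\<alpha>) else 0) = g"
    by (auto simp: g_def indicator_def fun_eq_iff)
  ultimately have hi: "(g has_integral ((1+t) powr (1-\<alpha>)/(\<alpha>-1))) UNIV" by simp
  have gm: "g \<in> borel_measurable borel" unfolding g_def by measurable
  have "integral\<^sup>N lborel g = (1+t) powr (1-\<alpha>)/(\<alpha>-1)"
    using nn_integral_has_integral_lborel[OF gm _ hi] unfolding g_def by auto
  hence "integrable lborel g \<and> integral\<^sup>L lborel g = (1+t) powr (1-\<alpha>)/(\<alpha>-1)"
    using assms by (subst nn_integral_eq_integrable[symmetric]) (auto simp: g_def)
  thus ?thesis unfolding Gbar_def set_lebesgue_integral_def g_def by simp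
qed

lemma Gbar_diff:
  fixes \<alpha> a b :: real
  assumes "\<alpha> > 1" "a \<ge> 0" "a \<le> b"
  shows "Gbar \<alpha> a - Gbar \<alpha> b \<ge> (b - a) * (1+b) powr (-\<alpha>)"
proof -
  have eq: "Gbar \<alpha> a - Gbar \<alpha> b = (1+b) powr (1-\<alpha>)/(1-\<alpha>) - (1+a) powr (1-\<alpha>)/(1-\<alpha>)"
    using assms by (simp add: Gbar_closed field_simps)
  have "integral {a..b} (\<lambda>s::real. (1+b) powr (-\<alpha>)) \<le> integral {a..b} (\<lambda>s. (1+s) powr (-\<alpha>))"
    using Gbar_FTC[OF assms] assms
    by (intro integral_le) (auto intro!: powr_mono2')
  thus ?thesis using integral_unique[OF Gbar_FTC[OF assms]] eq assms by simp
qed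

theorem lemma2:
  fixes M :: "'a measure" and X :: "nat \<Rightarrow> 'a \<Rightarrow> real"
    and \<mu> m \<delta> \<gamma> \<alpha> :: real and k :: nat
  assumes P: "prob_space M"
    and rv: "\<And>i. X i \<in> borel_measurable M"
    and indep: "prob_space.indep_vars M (\<lambda>_. borel) X UNIV"
    and ident: "\<And>i. distr M borel (X i) = distr M borel (X 0)"
    and int1: "integrable M (X 0)"
    and mean0: "prob_space.expectation M (X 0) = 0"
    and int2: "integrable M (\<lambda>\<omega>. (X 0 \<omega>)\<^sup>2)"
    and mu: "\<mu> > 0"
    and m: "m \<ge> 1"
    and delta: "0 < \<delta>" "\<delta> \<le> 1/2"
    and gamma: "\<gamma> > 0"
    and alpha: "\<alpha> > 1"
    and i: "prob_space.expectation M (\<lambda>\<omega>. (X 0 \<omega>)\<^sup>2) / m powr (2 * (1 - \<delta>)) \<le> 1/2"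
    and ii: "\<forall>z\<in>{\<mu> * 2 ^ j | j. True}.
       6 * (1 + 2 * z + m) powr \<alpha> * measure M {\<omega> \<in> space M. X 0 \<omega> > (z + m) powr (1 - \<delta>)}
       / ((\<alpha> - 1) * (m + 1) powr (\<alpha> - 1) * \<mu>) \<le> 1"
    and iii: "\<forall>z\<in>{\<mu> * 2 ^ j | j. True}.
       exp (- \<gamma> * (m + z) powr \<delta>
            + \<gamma>\<^sup>2 * exp \<gamma> * prob_space.expectation M (\<lambda>\<omega>. (X 0 \<omega>)\<^sup>2) * z
              / ((m + z) powr (2 * (1 - \<delta>)) * \<mu>)
            + 4 * (z / \<mu>) * measure M {\<omega> \<in> space M. X 0 \<omega> > (z + m) powr (1 - \<delta>)})
       / (inverse 3 * (\<alpha> - 1) * (m + 1) powr (\<alpha> - 1) * (1 + 2 * z + m) powr (- \<alpha>) * z) \<le> 1"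
    and k: "k \<ge> 2"
  shows "\<forall>\<omega>\<in>space M. \<forall>t::nat.
           passage_time X \<mu> m \<omega> = enat t \<and> nseq (k - 1) \<le> t \<and> t \<le> nseq k - 1 \<longrightarrow>
           (let C = real (nseq (k - 1)) * \<mu> + m;
                \<theta> = \<gamma> / C powr (1 - \<delta>);
                \<psi> = (\<lambda>th. ln ((LINT \<omega>'|M. exp (th * X 0 \<omega>') * indicator {\<omega>'\<in>space M. X 0 \<omega>' \<le> C powr (1 - \<delta>)} \<omega>')
                              / measure M {\<omega>'\<in>space M. X 0 \<omega>' \<le> C powr (1 - \<delta>)}));
                g = (Gbar \<alpha> (m + \<mu> * real (nseq (k - 1))) - Gbar \<alpha> (m + \<mu> * real (nseq k)))
                    / Gbar \<alpha> (m + \<mu> * real (nseq 1))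
            in 3 * exp (- \<theta> * psum X t \<omega> + real t * \<psi> \<theta>) / g \<le> 1)"
proof (intro ballI allI impI)
  interpret prob_space M by (rule P)
  fix \<omega> t assume w: "\<omega> \<in> space M"
    and hyp: "passage_time X \<mu> m \<omega> = enat t \<and> nseq (k - 1) \<le> t \<and> t \<le> nseq k - 1"
  define N where "N = nseq (k - 1)"
  define z where "z = \<mu> * 2 ^ (k - 2)"
  define C where "C = real (nseq (k - 1)) * \<mu> + m"
  define c where "c = C powr (1 - \<delta>)"
  define \<theta> where "\<theta> = \<gamma> / C powr (1 - \<delta>)"
  define E2 where "E2 = expectation (\<lambda>\<omega>. (X 0 \<omega>)\<^sup>2)"
  define q where "q = prob {\<omega>' \<in> space M. X 0 \<omega>' > C powr (1 - \<delta>)}"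
  define \<psi> where "\<psi> = (\<lambda>th. ln ((LINT \<omega>'|M. exp (th * X 0 \<omega>') * indicator {\<omega>'\<in>space M. X 0 \<omega>' \<le> C powr (1 - \<delta>)} \<omega>')
                              / measure M {\<omega>'\<in>space M. X 0 \<omega>' \<le> C powr (1 - \<delta>)}))"
  define g where "g = (Gbar \<alpha> (m + \<mu> * real (nseq (k - 1))) - Gbar \<alpha> (m + \<mu> * real (nseq k)))
                    / Gbar \<alpha> (m + \<mu> * real (nseq 1))"
  define D where "D = (\<alpha> - 1) * (m + 1) powr (\<alpha> - 1) * (1 + 2 * z + m) powr (- \<alpha>) * z"
  have N: "real N = 2 ^ (k - 2)" unfolding N_def nseq_def by (simp add: diff_diff_add)
  have kk: "k - 1 = Suc (k - 2)" using k by arith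
  have Nk: "real (nseq k) = 2 * 2 ^ (k - 2)" unfolding nseq_def kk by simp
  have z_pos: "z > 0" unfolding z_def using mu by simp
  have CZ: "C = m + z" unfolding C_def z_def using N N_def by simp
  have C_pos: "C > 0" using CZ z_pos m by simp
  have Cm: "C \<ge> m" using CZ z_pos by simp
  have c_pos: "c > 0" unfolding c_def using C_pos by simp
  have th_pos: "\<theta> > 0" unfolding \<theta>_def using C_pos gamma by simp
  have thc: "\<theta> * c = \<gamma>" unfolding \<theta>_def c_def using C_pos by simp
  have E2_nonneg: "E2 \<ge> 0" unfolding E2_def by (intro integral_nonneg_AE AE_I2) auto
  have c2: "c\<^sup>2 = C powr (2 * (1 - \<delta>))"
  proof -
    have "C powr (2 * (1 - \<delta>)) = C powr ((1 - \<delta>) + (1 - \<delta>))" by (simp only: mult_2)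
    also have "\<dots> = c * c" unfolding c_def by (rule powr_add)
    finally show ?thesis by (simp add: power2_eq_square)
  qed
  have cm: "m powr (2 * (1 - \<delta>)) \<le> c\<^sup>2" unfolding c2 using Cm m delta by (intro powr_mono2) auto
  have mpos: "m powr (2 * (1 - \<delta>)) > 0" using m by simp
  have "q \<le> E2 / c\<^sup>2" unfolding q_def E2_def c_def[symmetric] by (rule cheb[OF rv int2 c_pos])
  also have "\<dots> \<le> E2 / m powr (2 * (1 - \<delta>))" using E2_nonneg cm mpos c_pos by (intro divide_left_mono) (auto intro!: mult_pos_pos)
  also have "\<dots> \<le> 1/2" using i unfolding E2_def .
  finally have q_half: "q \<le> 1/2" .
  have q_nonneg: "q \<ge> 0" unfolding q_def by simp
  have psi_le: "\<psi> \<theta> \<le> \<theta>\<^sup>2 * exp \<gamma> * E2 / 2 + 2 * q"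
    unfolding \<psi>_def E2_def q_def c_def[symmetric]
    by (rule psi_bound[OF rv int1 mean0 int2 c_pos th_pos thc]) (use q_half in \<open>simp add: q_def c_def\<close>)
  have ex: "\<exists>n. psum X n \<omega> - \<mu> * real n > m"
    using hyp by (auto simp: passage_time_def split: if_splits)
  hence "t = (LEAST n. psum X n \<omega> - \<mu> * real n > m)"
    using hyp by (auto simp: passage_time_def)
  hence S: "psum X t \<omega> - \<mu> * real t > m" using LeastI_ex[OF ex] by simp
  have tN: "real t \<ge> real N" using hyp N_def by simp
  have tN2: "real t \<le> 2 * real N"
  proof -
    have "t \<le> nseq k" using hyp by arith
    hence "real t \<le> real (nseq k)" by simp
    thus ?thesis using Nk N by simp
  qed
  have thC: "\<theta> * C = \<gamma> * C powr \<delta>"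
  proof -
    have "C powr \<delta> * C powr (1 - \<delta>) = C" using C_pos by (simp add: powr_add[symmetric])
    thus ?thesis unfolding \<theta>_def using C_pos by (simp add: field_simps)
  qed
  have part1: "- \<theta> * psum X t \<omega> \<le> - \<gamma> * C powr \<delta>"
  proof -
    have "C \<le> \<mu> * real t + m" using CZ z_def N tN mu by (simp add: mult_left_mono z_def)
    also have "\<dots> \<le> psum X t \<omega>" using S by simp
    finally have "\<theta> * C \<le> \<theta> * psum X t \<omega>" using th_pos by (intro mult_left_mono) auto
    thus ?thesis using thC by simp
  qed
  define B where "B = \<theta>\<^sup>2 * exp \<gamma> * E2 / 2"
  have B_nonneg: "B \<ge> 0" unfolding B_def using E2_nonneg by simp
  have part2: "real t * \<psi> \<theta> \<le> 2 * (z / \<mu>) * (B + 2 * q)"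
  proof -
    have "real t * \<psi> \<theta> \<le> real t * (B + 2 * q)" using psi_le B_def by (intro mult_left_mono) auto
    also have "\<dots> \<le> (2 * (z / \<mu>)) * (B + 2 * q)"
    proof (rule mult_right_mono)
      show "real t \<le> 2 * (z / \<mu>)" using tN2 N mu unfolding z_def by simp
    qed (use B_nonneg q_nonneg in simp)
    finally show ?thesis .
  qed
  have part2': "2 * (z / \<mu>) * (B + 2 * q) =
     \<gamma>\<^sup>2 * exp \<gamma> * E2 * z / ((m + z) powr (2 * (1 - \<delta>)) * \<mu>) + 4 * (z / \<mu>) * q"
  proof -
    have "\<theta>\<^sup>2 = \<gamma>\<^sup>2 / C powr (2 * (1 - \<delta>))" using c2 unfolding \<theta>_def c_def by (simp add: power_divide)
    thus ?thesis unfolding B_def CZ using mu by (simp add: field_simps)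
  qed
  have zin: "z \<in> {\<mu> * 2 ^ j | j. True}" unfolding z_def by blast
  have D_pos: "D > 0" unfolding D_def using alpha m z_pos by simp
  have den3: "inverse 3 * (\<alpha> - 1) * (m + 1) powr (\<alpha> - 1) * (1 + 2 * z + m) powr (- \<alpha>) * z = D / 3"
    unfolding D_def by simp
  have iii': "exp (- \<gamma> * (m + z) powr \<delta>
            + \<gamma>\<^sup>2 * exp \<gamma> * E2 * z / ((m + z) powr (2 * (1 - \<delta>)) * \<mu>)
            + 4 * (z / \<mu>) * q) / (inverse 3 * (\<alpha> - 1) * (m + 1) powr (\<alpha> - 1) * (1 + 2 * z + m) powr (- \<alpha>) * z) \<le> 1"
    using bspec[OF iii zin] unfolding E2_def q_def CZ add.commute[of z m] .
  hence iii'': "3 * exp (- \<gamma> * (m + z) powr \<delta>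
            + \<gamma>\<^sup>2 * exp \<gamma> * E2 * z / ((m + z) powr (2 * (1 - \<delta>)) * \<mu>)
            + 4 * (z / \<mu>) * q) \<le> D"
    unfolding den3 using D_pos by (simp add: divide_le_eq)
  have expo: "- \<theta> * psum X t \<omega> + real t * \<psi> \<theta> \<le> - \<gamma> * (m + z) powr \<delta>
            + \<gamma>\<^sup>2 * exp \<gamma> * E2 * z / ((m + z) powr (2 * (1 - \<delta>)) * \<mu>)
            + 4 * (z / \<mu>) * q"
    using part1 part2 part2' CZ by simp
  have lhs: "3 * exp (- \<theta> * psum X t \<omega> + real t * \<psi> \<theta>) \<le> D"
    using iii'' expo by (smt (verit) exp_le_cancel_iff)
  have gD: "D \<le> g"
  proof -
    have e1: "m + \<mu> * real (nseq (k - 1)) = m + z" using N N_def z_def by simp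
    have e2: "m + \<mu> * real (nseq k) = m + 2 * z" using Nk z_def by simp
    have e3: "real (nseq 1) = 1" by (simp add: nseq_def)
    have num: "Gbar \<alpha> (m + z) - Gbar \<alpha> (m + 2 * z) \<ge> z * (1 + 2 * z + m) powr (- \<alpha>)"
      using Gbar_diff[OF alpha, of "m + z" "m + 2 * z"] m z_pos by (simp add: add_ac)
    have den: "Gbar \<alpha> (m + \<mu>) = (1 + (m + \<mu>)) powr (1 - \<alpha>) / (\<alpha> - 1)"
      using Gbar_closed[OF alpha, of "m + \<mu>"] m mu by simp
    have den_pos: "Gbar \<alpha> (m + \<mu>) > 0" using den alpha m mu by simp
    have den_le: "Gbar \<alpha> (m + \<mu>) \<le> (m + 1) powr (1 - \<alpha>) / (\<alpha> - 1)"
      unfolding den using alpha m mu by (intro divide_right_mono powr_mono2') auto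
    have "D = z * (1 + 2 * z + m) powr (- \<alpha>) / ((m + 1) powr (1 - \<alpha>) / (\<alpha> - 1))"
    proof -
      have Pe: "(m + 1) powr (\<alpha> - 1) = 1 / (m + 1) powr (1 - \<alpha>)"
        using powr_minus[of "m + 1" "1 - \<alpha>"] by (simp add: divide_inverse)
      have "(m + 1) powr (1 - \<alpha>) > 0" using m by simp
      thus ?thesis unfolding D_def Pe using alpha by (simp add: field_simps)
    qed
    also have "\<dots> \<le> (Gbar \<alpha> (m + z) - Gbar \<alpha> (m + 2 * z)) / Gbar \<alpha> (m + \<mu>)"
    proof (rule frac_le)
      have "z * (1 + 2 * z + m) powr (- \<alpha>) \<ge> 0" using z_pos by simp
      thus "0 \<le> Gbar \<alpha> (m + z) - Gbar \<alpha> (m + 2 * z)" using num by linarith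
    qed (use num den_pos den_le in auto)
    also have "\<dots> = g" unfolding g_def e1 e2 e3 by simp
    finally show ?thesis .
  qed
  have g_pos: "g > 0" using gD D_pos by simp
  have "3 * exp (- \<theta> * psum X t \<omega> + real t * \<psi> \<theta>) / g \<le> 1"
    using lhs gD g_pos by (simp add: divide_le_eq)
  thus "let C = real (nseq (k - 1)) * \<mu> + m;
                \<theta> = \<gamma> / C powr (1 - \<delta>);
                \<psi> = (\<lambda>th. ln ((LINT \<omega>'|M. exp (th * X 0 \<omega>') * indicator {\<omega>'\<in>space M. X 0 \<omega>' \<le> C powr (1 - \<delta>)} \<omega>')
                              / measure M {\<omega>'\<in>space M. X 0 \<omega>' \<le> C powr (1 - \<delta>)}));
                g = (Gbar \<alpha> (m + \<mu> * real (nseq (k - 1))) - Gbar \<alpha> (m + \<mu> * real (nseq k)))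
                    / Gbar \<alpha> (m + \<mu> * real (nseq 1))
            in 3 * exp (- \<theta> * psum X t \<omega> + real t * \<psi> \<theta>) / g \<le> 1"
    unfolding Let_def \<psi>_def \<theta>_def g_def C_def .
qed

end
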